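(* There is an absolute constant $c$ such that the following holds. Let $\mu>0$, $n$ be such that $n_0:=n-\mu^2/4-1/2>0$, and let $\ell_0<\ell_1<n_0$ be nonnegative integers; write $k=n_0-\ell$, $k_0=n_0-\ell_0$, $k_1=n_0-\ell_1$. For $0\le\ell<n_0$ let $$\rho_\ell=\sqrt{\frac{\mu^2/4}{\mu^2/4+n_0-\ell}}+i\sqrt{\frac{n_0-\ell}{\mu^2/4+n_0-\ell}},\qquad\eta_\ell=\rho_0^2\rho_1^2\cdots\rho_\ell^2 .$$ Then for any complex numbers $g_{\ell_0},\dots,g_{\ell_1}$, $$\Big|\Re\sum_{\ell=\ell_0}^{\ell_1}g_\ell\eta_\ell\Big|\le c\big(\mu k_1^{-1/2}+1\big)|g_{\ell_1}|+c\sum_{\ell=\ell_0}^{\ell_1-1}\big(\mu k^{-1/2}+1\big)|g_{\ell+1}-g_\ell|,$$ $$\Big|\Re\sum_{\ell=\ell_0}^{\ell_1}g_\ell\eta_\ell^2\Big|\le c\big(\mu k_1^{-1/2}+\mu^{-1}k_0^{1/2}\big)|g_{\ell_1}|+c\sum_{\ell=\ell_0}^{\ell_1-1}\big(\mu k^{-1/2}+\mu^{-1}k_0^{1/2}\big)|g_{\ell+1}-g_\ell|.$$ *)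

theory Defs
  imports Complex_Main
begin

definition rho :: "real \<Rightarrow> real \<Rightarrow> nat \<Rightarrow> complex" where
  "rho \<mu> n0 l = Complex (sqrt ((\<mu>^2/4) / (\<mu>^2/4 + n0 - real l)))
                        (sqrt ((n0 - real l) / (\<mu>^2/4 + n0 - real l)))"

definition eta :: "real \<Rightarrow> real \<Rightarrow> nat \<Rightarrow> complex" where
  "eta \<mu> n0 l = (\<Prod>j\<in>{0..l}. (rho \<mu> n0 j)^2)"

end

theory Submission
  imports Defs
begin

lemma abel_id:
  fixes g x :: "nat \<Rightarrow> complex"
  assumes "m \<le> M"
  shows "(\<Sum>l=m..M. g l * x l) = g M * (\<Sum>j=m..M. x j) - (\<Sum>l=m..<M. (g (Suc l) - g l) * (\<Sum>j=m..l. x j))"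
  using assms
proof (induction M rule: dec_induct)
  case base
  then show ?case by simp
next
  case (step n)
  then show ?case by (simp add: sum.atLeastLessThan_Suc algebra_simps)
qed

lemma abel_sum_bound:
  fixes g x :: "nat \<Rightarrow> complex" and B :: "nat \<Rightarrow> real"
  assumes "m \<le> M" "\<And>l. m \<le> l \<Longrightarrow> l \<le> M \<Longrightarrow> norm (\<Sum>j=m..l. x j) \<le> B l"
  shows "norm (\<Sum>l=m..M. g l * x l) \<le> B M * norm (g M) + (\<Sum>l=m..<M. B l * norm (g (Suc l) - g l))"
proof -
  have "norm (\<Sum>l=m..M. g l * x l) \<le> norm (g M * (\<Sum>j=m..M. x j)) + norm (\<Sum>l=m..<M. (g (Suc l) - g l) * (\<Sum>j=m..l. x j))"
    unfolding abel_id[OF assms(1)] by (rule norm_triangle_ineq4)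
  also have "norm (g M * (\<Sum>j=m..M. x j)) \<le> B M * norm (g M)"
    using assms(2)[of M] assms(1) by (simp add: norm_mult) (metis mult.commute mult_left_mono norm_ge_zero)
  also have "norm (\<Sum>l=m..<M. (g (Suc l) - g l) * (\<Sum>j=m..l. x j)) \<le> (\<Sum>l=m..<M. norm ((g (Suc l) - g l) * (\<Sum>j=m..l. x j)))"
    by (rule norm_sum)
  also have "\<dots> \<le> (\<Sum>l=m..<M. B l * norm (g (Suc l) - g l))"
  proof (rule sum_mono)
    fix l assume "l \<in> {m..<M}"
    then show "norm ((g (Suc l) - g l) * (\<Sum>j=m..l. x j)) \<le> B l * norm (g (Suc l) - g l)"
      using assms(2)[of l] by (simp add: norm_mult) (metis mult.commute mult_left_mono norm_ge_zero)
  qed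
  finally show ?thesis by simp
qed

lemma parts_id:
  fixes E :: "nat \<Rightarrow> complex" and t :: "nat \<Rightarrow> real"
  assumes "m \<le> M"
  shows "(\<Sum>j=m..M. (E j - E (Suc j)) * of_real (t j)) = E m * of_real (t m) - E (Suc M) * of_real (t M) + (\<Sum>j=m..<M. E (Suc j) * of_real (t (Suc j) - t j))"
  using assms
proof (induction M rule: dec_induct)
  case base
  then show ?case by (simp add: algebra_simps)
next
  case (step n)
  then show ?case by (simp add: sum.atLeastLessThan_Suc algebra_simps)
qed

lemma parts_bound:
  fixes E :: "nat \<Rightarrow> complex" and t :: "nat \<Rightarrow> real"
  assumes "m \<le> M" "\<And>j. m \<le> j \<Longrightarrow> j \<le> Suc M \<Longrightarrow> norm (E j) \<le> 1"
  shows "norm (\<Sum>j=m..M. (E j - E (Suc j)) * of_real (t j)) \<le> \<bar>t m\<bar> + \<bar>t M\<bar> + (\<Sum>j=m..<M. \<bar>t (Suc j) - t j\<bar>)"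
proof -
  have "norm (\<Sum>j=m..M. (E j - E (Suc j)) * of_real (t j)) \<le> norm (E m * of_real (t m)) + norm (E (Suc M) * of_real (t M)) + norm (\<Sum>j=m..<M. E (Suc j) * of_real (t (Suc j) - t j))"
    unfolding parts_id[OF assms(1)]
    using norm_triangle_ineq[of "E m * of_real (t m) - E (Suc M) * of_real (t M)" "\<Sum>j=m..<M. E (Suc j) * of_real (t (Suc j) - t j)"]
      norm_triangle_ineq4[of "E m * of_real (t m)" "E (Suc M) * of_real (t M)"] by linarith
  also have "norm (E m * of_real (t m)) \<le> \<bar>t m\<bar>"
    using assms(2)[of m] assms(1) by (simp add: norm_mult) (rule mult_left_le_one_le, auto)
  also have "norm (E (Suc M) * of_real (t M)) \<le> \<bar>t M\<bar>"
    using assms(2)[of "Suc M"] assms(1) by (simp add: norm_mult) (rule mult_left_le_one_le, auto)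
  also have "norm (\<Sum>j=m..<M. E (Suc j) * of_real (t (Suc j) - t j)) \<le> (\<Sum>j=m..<M. norm (E (Suc j) * of_real (t (Suc j) - t j)))"
    by (rule norm_sum)
  also have "\<dots> \<le> (\<Sum>j=m..<M. \<bar>t (Suc j) - t j\<bar>)"
  proof (rule sum_mono)
    fix j assume "j \<in> {m..<M}"
    then show "norm (E (Suc j) * of_real (t (Suc j) - t j)) \<le> \<bar>t (Suc j) - t j\<bar>"
      using assms(2)[of "Suc j"] by (simp add: norm_mult of_real_diff[symmetric] del: of_real_diff) (rule mult_left_le_one_le, auto)
  qed
  finally show ?thesis by simp
qed

lemma telesc:
  fixes t :: "nat \<Rightarrow> real"
  assumes "m \<le> M"
  shows "(\<Sum>j=m..<M. t (Suc j) - t j) = t M - t m"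
  using assms by (induction M rule: dec_induct) (simp_all add: sum.atLeastLessThan_Suc)

lemma parts_bound_inc:
  fixes E :: "nat \<Rightarrow> complex" and t :: "nat \<Rightarrow> real"
  assumes "m \<le> M" "\<And>j. m \<le> j \<Longrightarrow> j \<le> Suc M \<Longrightarrow> norm (E j) \<le> 1"
    and "\<And>j. m \<le> j \<Longrightarrow> j < M \<Longrightarrow> t j \<le> t (Suc j)" "0 \<le> t m"
  shows "norm (\<Sum>j=m..M. (E j - E (Suc j)) * of_real (t j)) \<le> 2 * t M"
proof -
  have "(\<Sum>j=m..<M. \<bar>t (Suc j) - t j\<bar>) = (\<Sum>j=m..<M. t (Suc j) - t j)"
    using assms(3) by (intro sum.cong) auto
  also have "\<dots> = t M - t m" by (rule telesc[OF assms(1)])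
  finally have "t m \<le> t M" "(\<Sum>j=m..<M. \<bar>t (Suc j) - t j\<bar>) = t M - t m"
    using sum_nonneg[where A="{m..<M}" and f="\<lambda>j. \<bar>t (Suc j) - t j\<bar>", OF abs_ge_zero] by auto
  then show ?thesis using parts_bound[OF assms(1,2), where t=t] assms(4) by simp
qed

lemma parts_bound_dec:
  fixes E :: "nat \<Rightarrow> complex" and t :: "nat \<Rightarrow> real"
  assumes "m \<le> M" "\<And>j. m \<le> j \<Longrightarrow> j \<le> Suc M \<Longrightarrow> norm (E j) \<le> 1"
    and "\<And>j. m \<le> j \<Longrightarrow> j < M \<Longrightarrow> t (Suc j) \<le> t j" "0 \<le> t M"
  shows "norm (\<Sum>j=m..M. (E j - E (Suc j)) * of_real (t j)) \<le> 2 * t m"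
proof -
  have "(\<Sum>j=m..<M. \<bar>t (Suc j) - t j\<bar>) = - (\<Sum>j=m..<M. t (Suc j) - t j)"
    using assms(3) by (simp add: sum_negf[symmetric])
  also have "\<dots> = t m - t M" using telesc[OF assms(1)] by simp
  finally have "t M \<le> t m" "(\<Sum>j=m..<M. \<bar>t (Suc j) - t j\<bar>) = t m - t M"
    using sum_nonneg[where A="{m..<M}" and f="\<lambda>j. \<bar>t (Suc j) - t j\<bar>", OF abs_ge_zero] by auto
  then show ?thesis using parts_bound[OF assms(1,2), where t=t] assms(4) by simp
qed

lemma cid1:
  fixes p q :: real
  assumes "q > 0" "p^2 + q^2 = 1"
  shows "(Complex p q)^2 = (1 - (Complex p q)^2) * Complex (-1/2) (p/q/2)"
proof -
  have h: "p*p = 1 - q*q" using assms(2) by (simp add: power2_eq_square)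
  show ?thesis using assms(1) by (simp add: complex_eq_iff power2_eq_square h algebra_simps) (simp add: field_simps h)
qed
lemma cid2:
  fixes p q :: real
  assumes "p > 0" "q > 0" "p^2 + q^2 = 1"
  shows "((Complex p q)^2)^2 = (1 - ((Complex p q)^2)^2) * Complex (-1/2) ((p/q - q/p)/4)"
proof -
  have sq: "(Complex p q)^2 = Complex (p^2-q^2) (2*p*q)" by (simp add: complex_eq_iff power2_eq_square)
  have "(p^2-q^2)^2 + (2*p*q)^2 = (p^2+q^2)^2" by (simp add: power2_eq_square algebra_simps)
  then have n1: "(p^2-q^2)^2 + (2*p*q)^2 = 1" using assms(3) by simp
  have e: "(p/q - q/p)/4 = (p^2-q^2)/(2*p*q)/2" using assms(1,2) by (simp add: field_simps power2_eq_square)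
  have "0 < 2*p*q" using assms(1,2) by simp
  show ?thesis unfolding sq e by (rule cid1[OF _ n1]) fact
qed

lemma rho_facts:
  assumes mu: "\<mu> > 0" and k: "n0 - real j > 0"
  shows "cmod (rho \<mu> n0 j) = 1"
    and "(rho \<mu> n0 j)^2 = (1 - (rho \<mu> n0 j)^2) * Complex (-1/2) (\<mu>/(2*sqrt(n0 - real j))/2)"
    and "((rho \<mu> n0 j)^2)^2 = (1 - ((rho \<mu> n0 j)^2)^2) * Complex (-1/2) ((\<mu>/(2*sqrt(n0 - real j)) - 1/(\<mu>/(2*sqrt(n0 - real j))))/4)"
proof -
  define A where "A = \<mu>^2/4"
  define k where "k = n0 - real j"
  define p where "p = sqrt (A/(A+k))"
  define q where "q = sqrt (k/(A+k))"
  have A0: "A > 0" using mu by (simp add: A_def)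
  have k0: "k > 0" using k by (simp add: k_def)
  have rho: "rho \<mu> n0 j = Complex p q"
    by (simp add: rho_def p_def q_def A_def k_def add_diff_eq)
  have p0: "p > 0" using A0 k0 by (simp add: p_def)
  have q0: "q > 0" using A0 k0 by (simp add: q_def)
  have "p^2 + q^2 = A/(A+k) + k/(A+k)" using A0 k0 by (simp add: p_def q_def)
  also have "\<dots> = 1" using A0 k0 by (simp add: add_divide_distrib[symmetric])
  finally have pq: "p^2 + q^2 = 1" .
  have sA: "sqrt A = \<mu>/2" using mu by (simp add: A_def real_sqrt_divide)
  have "p/q = sqrt A / sqrt k" using A0 k0
    by (simp add: p_def q_def real_sqrt_divide field_simps)
  then have r: "p/q = \<mu>/(2*sqrt(n0 - real j))" by (simp add: sA k_def)
  have r2: "q/p = 1/(p/q)" by simp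
  show "cmod (rho \<mu> n0 j) = 1" by (simp add: rho complex_norm pq)
  show "(rho \<mu> n0 j)^2 = (1 - (rho \<mu> n0 j)^2) * Complex (-1/2) (\<mu>/(2*sqrt(n0 - real j))/2)"
    unfolding rho r[symmetric] by (rule cid1[OF q0 pq])
  show "((rho \<mu> n0 j)^2)^2 = (1 - ((rho \<mu> n0 j)^2)^2) * Complex (-1/2) ((\<mu>/(2*sqrt(n0 - real j)) - 1/(\<mu>/(2*sqrt(n0 - real j))))/4)"
    unfolding rho r[symmetric] r2[symmetric] by (rule cid2[OF p0 q0 pq])
qed

lemma norm3:
  fixes u v z :: complex
  shows "norm (u + \<i> * v - \<i> * z) \<le> norm u + norm v + norm z"
proof -
  have "norm (u + \<i> * v - \<i> * z) \<le> norm (u + \<i> * v) + norm (\<i> * z)" by (rule norm_triangle_ineq4)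
  moreover have "norm (u + \<i> * v) \<le> norm u + norm (\<i> * v)" by (rule norm_triangle_ineq)
  ultimately show ?thesis by (simp add: norm_mult)
qed

lemma psum_generic:
  fixes E x :: "nat \<Rightarrow> complex" and a b :: "nat \<Rightarrow> real"
  assumes ml: "m \<le> l" and nE: "\<And>j. m \<le> j \<Longrightarrow> j \<le> Suc l \<Longrightarrow> norm (E j) \<le> 1"
    and x: "\<And>j. m \<le> j \<Longrightarrow> j \<le> l \<Longrightarrow> x j = (E j - E (Suc j)) * Complex (-1/2) (a j - b j)"
    and ai: "\<And>j. m \<le> j \<Longrightarrow> j < l \<Longrightarrow> a j \<le> a (Suc j)" and a0: "0 \<le> a m"
    and bd: "\<And>j. m \<le> j \<Longrightarrow> j < l \<Longrightarrow> b (Suc j) \<le> b j" and b0: "0 \<le> b l"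
  shows "norm (\<Sum>j=m..l. x j) \<le> 1 + 2 * a l + 2 * b m"
proof -
  have "(\<Sum>j=m..l. x j) = (\<Sum>j=m..l. (E j - E (Suc j)) * of_real (-1/2) + \<i> * ((E j - E (Suc j)) * of_real (a j)) - \<i> * ((E j - E (Suc j)) * of_real (b j)))"
    by (rule sum.cong) (simp_all add: x Complex_eq algebra_simps)
  also have "\<dots> = (\<Sum>j=m..l. (E j - E (Suc j)) * of_real (-1/2))
      + \<i> * (\<Sum>j=m..l. (E j - E (Suc j)) * of_real (a j))
      - \<i> * (\<Sum>j=m..l. (E j - E (Suc j)) * of_real (b j))"
    by (simp add: sum.distrib sum_subtractf sum_distrib_left sum_negf)
  finally have eq: "(\<Sum>j=m..l. x j) = (\<Sum>j=m..l. (E j - E (Suc j)) * of_real (-1/2))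
      + \<i> * (\<Sum>j=m..l. (E j - E (Suc j)) * of_real (a j))
      - \<i> * (\<Sum>j=m..l. (E j - E (Suc j)) * of_real (b j))" .
  have n1: "norm (\<Sum>j=m..l. (E j - E (Suc j)) * of_real (-1/2)) \<le> 1"
    using parts_bound[OF ml nE, where t="\<lambda>_. -1/2"] by simp
  have n2: "norm (\<Sum>j=m..l. (E j - E (Suc j)) * of_real (a j)) \<le> 2 * a l"
    by (rule parts_bound_inc[OF ml nE ai a0])
  have n3: "norm (\<Sum>j=m..l. (E j - E (Suc j)) * of_real (b j)) \<le> 2 * b m"
    by (rule parts_bound_dec[OF ml nE bd b0])
  show ?thesis unfolding eq
    using norm3[of "\<Sum>j=m..l. (E j - E (Suc j)) * of_real (-1/2)" "\<Sum>j=m..l. (E j - E (Suc j)) * of_real (a j)" "\<Sum>j=m..l. (E j - E (Suc j)) * of_real (b j)"] n1 n2 n3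
    by linarith
qed


lemma psums:
  assumes mu: "\<mu> > 0" and ml: "m \<le> l" and ln: "real l < n0"
  shows "norm (\<Sum>j=m..l. eta \<mu> n0 j) \<le> 1 + \<mu>/(2*sqrt(n0 - real l))"
    and "norm (\<Sum>j=m..l. (eta \<mu> n0 j)^2) \<le> 1 + \<mu>/(4*sqrt(n0 - real l)) + sqrt(n0 - real m)/\<mu>"
proof -
  define R where "R j = \<mu>/(2*sqrt(n0 - real j))" for j
  define w where "w j = (rho \<mu> n0 j)^2" for j
  define E where "E j = (\<Prod>i<j. w i)" for j
  have kpos: "n0 - real j > 0" if "j \<le> l" for j using that ln by linarith
  have Rpos: "R j > 0" if "j \<le> l" for j using kpos[OF that] mu by (simp add: R_def)
  have nw: "norm (w i) = 1" if "i \<le> l" for i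
    using rho_facts(1)[OF mu kpos[OF that]] by (simp add: w_def norm_power)
  have nE: "norm (E j) \<le> 1" if "j \<le> Suc l" for j
  proof -
    have "norm (E j) \<le> (\<Prod>i<j. norm (w i))" unfolding E_def by (rule norm_prod_le)
    also have "(\<Prod>i<j. norm (w i)) = 1" using that by (intro prod.neutral) (auto intro: nw)
    finally show ?thesis .
  qed
  have etaE: "eta \<mu> n0 j = E (Suc j)" for j
    unfolding eta_def E_def w_def by (simp only: atLeast0AtMost lessThan_Suc_atMost[symmetric])
  have ES: "E (Suc j) = E j * w j" for j by (simp add: E_def)
  have Rinc: "R j \<le> R (Suc j)" if "j < l" for j
  proof -
    have "sqrt (n0 - real (Suc j)) \<le> sqrt (n0 - real j)" by simp
    moreover have "0 < sqrt (n0 - real (Suc j))" using kpos[of "Suc j"] that by simp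
    ultimately show ?thesis unfolding R_def using mu
      by (intro divide_left_mono) (auto intro: mult_pos_pos)
  qed
  have Rdec: "1/R (Suc j) \<le> 1/R j" if "j < l" for j
    using Rinc[OF that] Rpos[of j] that by (intro divide_left_mono) auto
  have Rdec4: "1/(R (Suc j) * 4) \<le> 1/(R j * 4)" if "j < l" for j
    using Rinc[OF that] Rpos[of j] that by (intro divide_left_mono) auto
  show "norm (\<Sum>j=m..l. eta \<mu> n0 j) \<le> 1 + \<mu>/(2*sqrt(n0 - real l))"
  proof -
    have "norm (\<Sum>j=m..l. eta \<mu> n0 j) \<le> 1 + 2 * (R l / 2) + 2 * 0"
    proof (rule psum_generic[OF ml, where E=E and a="\<lambda>j. R j / 2" and b="\<lambda>_. 0"])
      fix j assume "m \<le> j" "j \<le> l"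
      have "eta \<mu> n0 j = E j * w j" by (simp add: etaE ES)
      also have "w j = (1 - w j) * Complex (-1/2) (R j/2)"
        using rho_facts(2)[OF mu kpos[OF \<open>j \<le> l\<close>]] by (simp add: w_def R_def)
      finally show "eta \<mu> n0 j = (E j - E (Suc j)) * Complex (- 1 / 2) (R j / 2 - 0)"
        by (simp add: ES algebra_simps)
    qed (use nE Rinc Rpos ml in \<open>auto intro: less_imp_le\<close>)
    then show ?thesis by (simp add: R_def)
  qed
  show "norm (\<Sum>j=m..l. (eta \<mu> n0 j)^2) \<le> 1 + \<mu>/(4*sqrt(n0 - real l)) + sqrt(n0 - real m)/\<mu>"
  proof -
    have "norm (\<Sum>j=m..l. (eta \<mu> n0 j)^2) \<le> 1 + 2 * (R l / 4) + 2 * ((1/R m)/4)"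
    proof (rule psum_generic[OF ml, where E="\<lambda>j. (E j)^2" and a="\<lambda>j. R j / 4" and b="\<lambda>j. (1/R j)/4"])
      fix j assume "m \<le> j" "j \<le> l"
      have "(eta \<mu> n0 j)^2 = (E j)^2 * (w j)^2" by (simp add: etaE ES power_mult_distrib)
      also have "(w j)^2 = (1 - (w j)^2) * Complex (-1/2) ((R j - 1/R j)/4)"
        using rho_facts(3)[OF mu kpos[OF \<open>j \<le> l\<close>]] by (simp add: w_def R_def)
      finally show "(eta \<mu> n0 j)^2 = ((E j)^2 - (E (Suc j))^2) * Complex (- 1 / 2) (R j / 4 - 1 / R j / 4)"
        by (simp add: ES power_mult_distrib algebra_simps diff_divide_distrib)
    next
      fix j assume "m \<le> j" "j \<le> Suc l"
      then show "norm ((E j)^2) \<le> 1" using nE[of j] by (simp add: norm_power power_le_one)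
    qed (use Rinc Rdec Rdec4 Rpos ml in \<open>auto intro: less_imp_le\<close>)
    moreover have "2 * ((1/R m)/4) = sqrt(n0 - real m)/\<mu>" using mu kpos[of m] ml by (simp add: R_def)
    ultimately show ?thesis by (simp add: R_def)
  qed
qed


lemma powr_mhalf: "(x::real) > 0 \<Longrightarrow> x powr (-1/2) = 1 / sqrt x"
proof -
  assume "x > 0"
  have "x powr (-1/2) = x powr (-(1/2))" by simp
  also have "\<dots> = inverse (x powr (1/2))" by (rule powr_minus)
  also have "\<dots> = 1 / sqrt x" using \<open>x > 0\<close> by (simp add: powr_half_sqrt inverse_eq_divide)
  finally show ?thesis .
qed

lemma main_n0:
  fixes g :: "nat \<Rightarrow> complex"
  assumes mu: "\<mu> > 0" and n0: "n0 > 0" and l01: "l0 < l1" and l1n: "real l1 < n0"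
  shows "\<bar>Re (\<Sum>l=l0..l1. g l * eta \<mu> n0 l)\<bar>
       \<le> 2 * (\<mu> * (n0 - real l1) powr (-1/2) + 1) * cmod (g l1)
         + 2 * (\<Sum>l=l0..<l1. (\<mu> * (n0 - real l) powr (-1/2) + 1) * cmod (g (Suc l) - g l))
     \<and>
     \<bar>Re (\<Sum>l=l0..l1. g l * (eta \<mu> n0 l)^2)\<bar>
       \<le> 2 * (\<mu> * (n0 - real l1) powr (-1/2) + (n0 - real l0) powr (1/2) / \<mu>) * cmod (g l1)
         + 2 * (\<Sum>l=l0..<l1. (\<mu> * (n0 - real l) powr (-1/2) + (n0 - real l0) powr (1/2) / \<mu>)
                              * cmod (g (Suc l) - g l))"
proof -
  define X where "X l = \<mu> * (n0 - real l) powr (-1/2)" for l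
  define Y where "Y = (n0 - real l0) powr (1/2) / \<mu>"
  have ml: "l0 \<le> l1" using l01 by simp
  have kpos: "n0 - real l > 0" if "l \<le> l1" for l using that l1n by linarith
  have Xe: "X l = \<mu> / sqrt (n0 - real l)" if "l \<le> l1" for l
    using powr_mhalf[OF kpos[OF that]] by (simp add: X_def)
  have Ye: "Y = sqrt (n0 - real l0) / \<mu>" using kpos[OF ml] by (simp add: Y_def powr_half_sqrt)
  have X0: "X l > 0" if "l \<le> l1" for l using Xe[OF that] kpos[OF that] mu by simp
  have Y0: "Y > 0" using Ye kpos[OF ml] mu by simp
  have XY: "X l * Y \<ge> 1" if "l0 \<le> l" "l \<le> l1" for l
  proof -
    have s: "0 < sqrt (n0 - real l)" using kpos[OF that(2)] by simp
    have "sqrt (n0 - real l) \<le> sqrt (n0 - real l0)" using that by simp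
    then have "1 \<le> sqrt (n0 - real l0) / sqrt (n0 - real l)" using s by simp
    also have "\<dots> = X l * Y" using Xe[OF that(2)] Ye mu by simp
    finally show ?thesis .
  qed
  have B1: "norm (\<Sum>j=l0..l. eta \<mu> n0 j) \<le> 2 * (X l + 1)" if "l0 \<le> l" "l \<le> l1" for l
  proof -
    have "norm (\<Sum>j=l0..l. eta \<mu> n0 j) \<le> 1 + \<mu>/(2*sqrt(n0 - real l))"
      using psums(1)[OF mu that(1)] that(2) l1n by simp
    also have "\<dots> = 1 + X l / 2" using Xe[OF that(2)] by simp
    also have "\<dots> \<le> 2 * (X l + 1)" using X0[OF that(2)] by simp
    finally show ?thesis .
  qed
  have B2: "norm (\<Sum>j=l0..l. (eta \<mu> n0 j)^2) \<le> 2 * (X l + Y)" if "l0 \<le> l" "l \<le> l1" for l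
  proof -
    have "norm (\<Sum>j=l0..l. (eta \<mu> n0 j)^2) \<le> 1 + \<mu>/(4*sqrt(n0 - real l)) + sqrt(n0 - real l0)/\<mu>"
      using psums(2)[OF mu that(1)] that(2) l1n by simp
    also have "\<dots> = 1 + X l / 4 + Y" using Xe[OF that(2)] Ye by simp
    also have "\<dots> \<le> 2 * (X l + Y)"
    proof -
      have "1 \<le> X l \<or> 1 \<le> Y"
      proof (rule ccontr)
        assume "\<not> (1 \<le> X l \<or> 1 \<le> Y)"
        then have "X l < 1" "Y < 1" by auto
        then have "X l * Y < 1 * 1" using X0[OF that(2)] Y0 by (intro mult_strict_mono) auto
        then show False using XY[OF that] by simp
      qed
      then show ?thesis using X0[OF that(2)] Y0 by auto
    qed
    finally show ?thesis .
  qed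
  have S1: "norm (\<Sum>l=l0..l1. g l * eta \<mu> n0 l) \<le> 2 * (X l1 + 1) * cmod (g l1) + (\<Sum>l=l0..<l1. 2 * (X l + 1) * cmod (g (Suc l) - g l))"
    by (rule abel_sum_bound[OF ml B1])
  have S2: "norm (\<Sum>l=l0..l1. g l * (eta \<mu> n0 l)^2) \<le> 2 * (X l1 + Y) * cmod (g l1) + (\<Sum>l=l0..<l1. 2 * (X l + Y) * cmod (g (Suc l) - g l))"
    by (rule abel_sum_bound[OF ml B2])
  have E1: "(\<Sum>l=l0..<l1. 2 * (X l + 1) * cmod (g (Suc l) - g l)) = 2 * (\<Sum>l=l0..<l1. (X l + 1) * cmod (g (Suc l) - g l))"
    by (simp add: sum_distrib_left algebra_simps)
  have E2: "(\<Sum>l=l0..<l1. 2 * (X l + Y) * cmod (g (Suc l) - g l)) = 2 * (\<Sum>l=l0..<l1. (X l + Y) * cmod (g (Suc l) - g l))"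
    by (simp add: sum_distrib_left algebra_simps)
  have G1: "\<bar>Re (\<Sum>l=l0..l1. g l * eta \<mu> n0 l)\<bar> \<le> 2 * (X l1 + 1) * cmod (g l1) + 2 * (\<Sum>l=l0..<l1. (X l + 1) * cmod (g (Suc l) - g l))"
    using order_trans[OF abs_Re_le_cmod S1] unfolding E1 .
  have G2: "\<bar>Re (\<Sum>l=l0..l1. g l * (eta \<mu> n0 l)^2)\<bar> \<le> 2 * (X l1 + Y) * cmod (g l1) + 2 * (\<Sum>l=l0..<l1. (X l + Y) * cmod (g (Suc l) - g l))"
    using order_trans[OF abs_Re_le_cmod S2] unfolding E2 .
  show ?thesis using G1 G2 unfolding X_def Y_def by blast
qed

theorem mainTheorem16:
  shows "\<exists>c::real. \<forall>(\<mu>::real) (n::real) (l0::nat) (l1::nat) (g::nat \<Rightarrow> complex).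
    let n0 = n - \<mu>^2/4 - 1/2 in
    (\<mu> > 0 \<and> n0 > 0 \<and> l0 < l1 \<and> real l1 < n0) \<longrightarrow>
    (\<bar>Re (\<Sum>l=l0..l1. g l * eta \<mu> n0 l)\<bar>
       \<le> c * (\<mu> * (n0 - real l1) powr (-1/2) + 1) * cmod (g l1)
         + c * (\<Sum>l=l0..<l1. (\<mu> * (n0 - real l) powr (-1/2) + 1) * cmod (g (Suc l) - g l))
     \<and>
     \<bar>Re (\<Sum>l=l0..l1. g l * (eta \<mu> n0 l)^2)\<bar>
       \<le> c * (\<mu> * (n0 - real l1) powr (-1/2) + (n0 - real l0) powr (1/2) / \<mu>) * cmod (g l1)
         + c * (\<Sum>l=l0..<l1. (\<mu> * (n0 - real l) powr (-1/2) + (n0 - real l0) powr (1/2) / \<mu>)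
                              * cmod (g (Suc l) - g l)))"
  unfolding Let_def
  apply (intro exI[of _ 2] allI impI)
  apply (elim conjE)
  apply (rule main_n0)
     apply assumption+
  done

end
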